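(* Let $\mathcal C$ be an operadic category. The category $\mathrm{Coll}_{\mathcal C}^U$ of right $U$-modules in $\mathrm{Coll}_{\mathcal C}$ is equivalent to the category $[\mathbb C^{\mathrm{op}},\mathbf{Set}]$ of presheaves on $\mathbb C$.
   Context: Operadic categories: $\mathcal S$ is a skeleton of finite sets, with fixed equivalences $R_I:\mathcal S/I\to\mathcal S^I$ sending $f:J\to I$ to its fibres. An operadic category is a category $\mathcal C$ with a functor $|\cdot|:\mathcal C\to\mathcal S$ and functors $R_c:\mathcal C/c\to\mathcal C^{|c|}$ with $|\cdot|^{|c|}\circ R_c=R_{|c|}\circ(|\cdot|/c)$; the fibre $\psi^{-1}i$ of $\psi:c\to d$ at $i\in|d|$ is the $i$-th component of $R_d(\psi)$; $\varphi^\psi=R_d(\varphi:\psi\varphi\to\psi)$ for $\varphi:b\to c,\psi:c\to d$; $u$ is trivial if $|u|=1$ and $R_u=\mathrm{dom}$. Axioms: fibres of identities are trivial; double slice condition: for $\psi:c\to d$, $R_c\circ(\mathrm{dom}/\psi)=(\cong)\circ(\prod_jR_{\psi^{-1}j})\circ(R_d/\psi)$ as functors $(\mathcal C/d)/\psi\to\mathcal C^{|c|}$, via $\mathcal C^{|d|}/R_d\psi\cong\prod_j\mathcal C/\psi^{-1}j$ and $|c|\cong\sum_j|\psi|^{-1}j$. A morphism is fibrewise trivial if all its fibres are trivial; these form a wide subcategory $\mathbb C$ of $\mathcal C$. $\mathrm{Coll}_{\mathcal C}$ is the skew monoidal category with underlying category $\mathbf{Set}/C$ ($C$ = object set; objects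 $\partial:X\to C$, $X_c=\partial^{-1}c$), tensor $(X*Y)_c=\sum_{\varphi:c\to d}X_d\times\prod_{i\in|d|}Y_{\varphi^{-1}i}$ (elements $(x,\varphi,y)$), unit $U$ the set of trivial objects, and maps $\alpha(x,\psi,y,\varphi,z)=(x,\psi\varphi,y,\varphi^\psi,z)$, $\lambda(u,\varphi,x)=x$, $\rho(x)=(x,1_{\partial x},(1_{\partial x}^{-1}i)_i)$. A right $U$-module is an object $X$ with $r:X*U\to X$ such that $r\circ(r*1)=r\circ(1*\lambda_U)\circ\alpha_{X,U,U}$ and $r\circ\rho_X=1_X$; morphisms are maps commuting with the actions. $\mathrm{Coll}_{\mathcal C}^U$ denotes this category of right $U$-modules. *)

theory Defs
  imports Main "HOL-Library.FuncSet"
begin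

record ('o,'m) category =
  Obj  :: "'o set"
  Arr  :: "'m set"
  Dom  :: "'m \<Rightarrow> 'o"
  Cod  :: "'m \<Rightarrow> 'o"
  Idm  :: "'o \<Rightarrow> 'm"
  Comp :: "'m \<Rightarrow> 'm \<Rightarrow> 'm"   (* Comp g f = g \<circ> f *)

definition is_category :: "('o,'m,'z) category_scheme \<Rightarrow> bool" where
  "is_category C \<longleftrightarrow>
     (\<forall>f\<in>Arr C. Dom C f \<in> Obj C \<and> Cod C f \<in> Obj C) \<and>
     (\<forall>a\<in>Obj C. Idm C a \<in> Arr C \<and> Dom C (Idm C a) = a \<and> Cod C (Idm C a) = a) \<and>
     (\<forall>f\<in>Arr C. \<forall>g\<in>Arr C. Cod C f = Dom C g \<longrightarrow>
        Comp C g f \<in> Arr C \<and> Dom C (Comp C g f) = Dom C f \<and> Cod C (Comp C g f) = Cod C g) \<and>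
     (\<forall>f\<in>Arr C. Comp C f (Idm C (Dom C f)) = f \<and> Comp C (Idm C (Cod C f)) f = f) \<and>
     (\<forall>f\<in>Arr C. \<forall>g\<in>Arr C. \<forall>h\<in>Arr C. Cod C f = Dom C g \<and> Cod C g = Dom C h \<longrightarrow>
        Comp C h (Comp C g f) = Comp C (Comp C h g) f)"

definition is_functor ::
  "('a,'b) category \<Rightarrow> ('c,'d) category \<Rightarrow> ('a \<Rightarrow> 'c) \<Rightarrow> ('b \<Rightarrow> 'd) \<Rightarrow> bool" where
  "is_functor A B Fo Fa \<longleftrightarrow>
     (\<forall>a\<in>Obj A. Fo a \<in> Obj B) \<and>
     (\<forall>f\<in>Arr A. Fa f \<in> Arr B \<and> Dom B (Fa f) = Fo (Dom A f) \<and> Cod B (Fa f) = Fo (Cod A f)) \<and>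
     (\<forall>a\<in>Obj A. Fa (Idm A a) = Idm B (Fo a)) \<and>
     (\<forall>f\<in>Arr A. \<forall>g\<in>Arr A. Cod A f = Dom A g \<longrightarrow> Fa (Comp A g f) = Comp B (Fa g) (Fa f))"

definition is_iso :: "('c,'d) category \<Rightarrow> 'd \<Rightarrow> bool" where
  "is_iso B f \<longleftrightarrow> f \<in> Arr B \<and>
     (\<exists>g\<in>Arr B. Dom B g = Cod B f \<and> Cod B g = Dom B f \<and>
        Comp B g f = Idm B (Dom B f) \<and> Comp B f g = Idm B (Cod B f))"

definition is_nat_iso ::
  "('a,'b) category \<Rightarrow> ('c,'d) category \<Rightarrow> ('a \<Rightarrow> 'c) \<Rightarrow> ('b \<Rightarrow> 'd) \<Rightarrow>
   ('a \<Rightarrow> 'c) \<Rightarrow> ('b \<Rightarrow> 'd) \<Rightarrow> ('a \<Rightarrow> 'd) \<Rightarrow> bool" where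
  "is_nat_iso A B Fo Fa Go Ga eta \<longleftrightarrow>
     (\<forall>a\<in>Obj A. eta a \<in> Arr B \<and> Dom B (eta a) = Fo a \<and> Cod B (eta a) = Go a \<and> is_iso B (eta a)) \<and>
     (\<forall>f\<in>Arr A. Comp B (eta (Cod A f)) (Fa f) = Comp B (Ga f) (eta (Dom A f)))"

definition equivalent_categories :: "('a,'b) category \<Rightarrow> ('c,'d) category \<Rightarrow> bool" where
  "equivalent_categories A B \<longleftrightarrow>
     (\<exists>Fo Fa Go Ga eta eps.
        is_functor A B Fo Fa \<and> is_functor B A Go Ga \<and>
        is_nat_iso A A id id (Go \<circ> Fo) (Ga \<circ> Fa) eta \<and>
        is_nat_iso B B (Fo \<circ> Go) (Fa \<circ> Ga) id id eps)"

text \<open>A presheaf is a pair (F0, F1): F0 c is a set, F1 f : F0 (Cod f) -> F0 (Dom f).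
  Data are extensional (undefined / empty outside their domain), so that equal
  presheaves and equal natural transformations are equal as HOL values.\<close>

type_synonym ('o,'m,'x) psh = "('o \<Rightarrow> 'x set) \<times> ('m \<Rightarrow> 'x \<Rightarrow> 'x)"
type_synonym ('o,'m,'x) psh_arr = "('o,'m,'x) psh \<times> ('o,'m,'x) psh \<times> ('o \<Rightarrow> 'x \<Rightarrow> 'x)"

definition is_presheaf :: "('o,'m) category \<Rightarrow> ('o,'m,'x) psh \<Rightarrow> bool" where
  "is_presheaf D F \<longleftrightarrow>
     (\<forall>c. c \<notin> Obj D \<longrightarrow> fst F c = {}) \<and>
     (\<forall>f\<in>Arr D. \<forall>x\<in>fst F (Cod D f). snd F f x \<in> fst F (Dom D f)) \<and>
     (\<forall>a\<in>Obj D. \<forall>x\<in>fst F a. snd F (Idm D a) x = x) \<and>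
     (\<forall>f\<in>Arr D. \<forall>g\<in>Arr D. Cod D f = Dom D g \<longrightarrow>
        (\<forall>x\<in>fst F (Cod D g). snd F (Comp D g f) x = snd F f (snd F g x))) \<and>
     (\<forall>f x. \<not> (f \<in> Arr D \<and> x \<in> fst F (Cod D f)) \<longrightarrow> snd F f x = undefined)"

definition is_psh_nat :: "('o,'m) category \<Rightarrow> ('o,'m,'x) psh \<Rightarrow> ('o,'m,'x) psh \<Rightarrow> ('o \<Rightarrow> 'x \<Rightarrow> 'x) \<Rightarrow> bool" where
  "is_psh_nat D F G eta \<longleftrightarrow>
     (\<forall>c\<in>Obj D. \<forall>x\<in>fst F c. eta c x \<in> fst G c) \<and>
     (\<forall>f\<in>Arr D. \<forall>x\<in>fst F (Cod D f). eta (Dom D f) (snd F f x) = snd G f (eta (Cod D f) x)) \<and>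
     (\<forall>c x. x \<notin> fst F c \<longrightarrow> eta c x = undefined)"

definition PSh :: "('o,'m) category \<Rightarrow> (('o,'m,'x) psh, ('o,'m,'x) psh_arr) category" where
  "PSh D = \<lparr> Obj = {F. is_presheaf D F},
             Arr = {(F, G, eta). is_presheaf D F \<and> is_presheaf D G \<and> is_psh_nat D F G eta},
             Dom = (\<lambda>(F, G, eta). F),
             Cod = (\<lambda>(F, G, eta). G),
             Idm = (\<lambda>F. (F, F, \<lambda>c. \<lambda>x\<in>fst F c. x)),
             Comp = (\<lambda>(G', H, th) (F, G, eta). (F, H, \<lambda>c. \<lambda>x\<in>fst F c. th c (eta c x))) \<rparr>"

text \<open>The skeleton S of finite sets has objects n (standing for {0..<n}) and morphisms
  functions between these.  An operadic category is a category together with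
  cardO : objects -> nat, cardM : morphisms -> S-morphisms (the functor |.|),
  and the functors R_d : C/d -> C^|d| given by
  fib psi i   (the i-th fibre of psi : c -> d, i < |d|), and
  fibm phi psi i : fib (psi o phi) i -> fib psi i (R_d applied to phi : psi o phi -> psi).\<close>

record ('o,'m) opcat = "('o,'m) category" +
  cardO :: "'o \<Rightarrow> nat"
  cardM :: "'m \<Rightarrow> nat \<Rightarrow> nat"
  fib   :: "'m \<Rightarrow> nat \<Rightarrow> 'o"
  fibm  :: "'m \<Rightarrow> 'm \<Rightarrow> nat \<Rightarrow> 'm"

text \<open>Preimage (fibre in S) of i under |psi|, and the position of j in a finite set of naturals;
  the fixed equivalences R_I of S enumerate fibres in increasing order.\<close>

definition fpre :: "('o,'m) opcat \<Rightarrow> 'm \<Rightarrow> nat \<Rightarrow> nat set" where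
  "fpre C psi i = {j. j < cardO C (Dom C psi) \<and> cardM C psi j = i}"

definition fpos :: "nat set \<Rightarrow> nat \<Rightarrow> nat" where
  "fpos A j = card {x\<in>A. x < j}"

definition trivial_obj :: "('o,'m) opcat \<Rightarrow> 'o \<Rightarrow> bool" where
  "trivial_obj C u \<longleftrightarrow> u \<in> Obj C \<and> cardO C u = 1 \<and>
     (\<forall>psi\<in>Arr C. Cod C psi = u \<longrightarrow> fib C psi 0 = Dom C psi) \<and>
     (\<forall>phi\<in>Arr C. \<forall>psi\<in>Arr C. Cod C phi = Dom C psi \<and> Cod C psi = u \<longrightarrow> fibm C phi psi 0 = phi)"

definition operadic_category :: "('o,'m) opcat \<Rightarrow> bool" where
  "operadic_category C \<longleftrightarrow>
     is_category C \<and>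
     \<comment> \<open>|.| is a functor C -> S\<close>
     (\<forall>f\<in>Arr C. \<forall>j<cardO C (Dom C f). cardM C f j < cardO C (Cod C f)) \<and>
     (\<forall>a\<in>Obj C. \<forall>j<cardO C a. cardM C (Idm C a) j = j) \<and>
     (\<forall>f\<in>Arr C. \<forall>g\<in>Arr C. Cod C f = Dom C g \<longrightarrow>
        (\<forall>j<cardO C (Dom C f). cardM C (Comp C g f) j = cardM C g (cardM C f j))) \<and>
     \<comment> \<open>R_d is a functor C/d -> C^|d|\<close>
     (\<forall>psi\<in>Arr C. \<forall>i<cardO C (Cod C psi). fib C psi i \<in> Obj C) \<and>
     (\<forall>phi\<in>Arr C. \<forall>psi\<in>Arr C. Cod C phi = Dom C psi \<longrightarrow> (\<forall>i<cardO C (Cod C psi).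
        fibm C phi psi i \<in> Arr C \<and>
        Dom C (fibm C phi psi i) = fib C (Comp C psi phi) i \<and>
        Cod C (fibm C phi psi i) = fib C psi i)) \<and>
     (\<forall>psi\<in>Arr C. \<forall>i<cardO C (Cod C psi). fibm C (Idm C (Dom C psi)) psi i = Idm C (fib C psi i)) \<and>
     (\<forall>phi\<in>Arr C. \<forall>phi'\<in>Arr C. \<forall>psi\<in>Arr C. Cod C phi = Dom C phi' \<and> Cod C phi' = Dom C psi \<longrightarrow>
        (\<forall>i<cardO C (Cod C psi). fibm C (Comp C phi' phi) psi i =
            Comp C (fibm C phi' psi i) (fibm C phi (Comp C psi phi') i))) \<and>
     \<comment> \<open>compatibility  |.|^|d| o R_d = R_|d| o (|.|/d)\<close>
     (\<forall>psi\<in>Arr C. \<forall>i<cardO C (Cod C psi). cardO C (fib C psi i) = card (fpre C psi i)) \<and>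
     (\<forall>phi\<in>Arr C. \<forall>psi\<in>Arr C. Cod C phi = Dom C psi \<longrightarrow> (\<forall>i<cardO C (Cod C psi).
        \<forall>k<cardO C (fib C (Comp C psi phi) i).
          cardM C (fibm C phi psi i) k =
            fpos (fpre C psi i) (cardM C phi (sorted_list_of_set (fpre C (Comp C psi phi) i) ! k)))) \<and>
     \<comment> \<open>fibres of identities are trivial\<close>
     (\<forall>a\<in>Obj C. \<forall>i<cardO C a. trivial_obj C (fib C (Idm C a) i)) \<and>
     \<comment> \<open>double slice condition, for psi : c -> d, objects phi : b -> c and morphisms sigma of (C/d)/psi;
         j < |c| corresponds to (i, k) = (|psi| j, position of j in |psi|^-1 i)\<close>
     (\<forall>psi\<in>Arr C. \<forall>phi\<in>Arr C. Cod C phi = Dom C psi \<longrightarrow> (\<forall>j<cardO C (Dom C psi).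
        fib C phi j = fib C (fibm C phi psi (cardM C psi j)) (fpos (fpre C psi (cardM C psi j)) j))) \<and>
     (\<forall>psi\<in>Arr C. \<forall>phi\<in>Arr C. \<forall>sigma\<in>Arr C. Cod C sigma = Dom C phi \<and> Cod C phi = Dom C psi \<longrightarrow>
        (\<forall>j<cardO C (Dom C psi).
          fibm C sigma phi j =
            fibm C (fibm C sigma (Comp C psi phi) (cardM C psi j)) (fibm C phi psi (cardM C psi j))
                   (fpos (fpre C psi (cardM C psi j)) j)))"

definition fibrewise_trivial :: "('o,'m) opcat \<Rightarrow> 'm \<Rightarrow> bool" where
  "fibrewise_trivial C phi \<longleftrightarrow> phi \<in> Arr C \<and>
     (\<forall>i<cardO C (Cod C phi). trivial_obj C (fib C phi i))"

definition FwTriv :: "('o,'m) opcat \<Rightarrow> ('o,'m) category" where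
  "FwTriv C = \<lparr> Obj = Obj C, Arr = {phi. fibrewise_trivial C phi}, Dom = Dom C, Cod = Cod C,
                Idm = Idm C, Comp = Comp C \<rparr>"

text \<open>An object X of Set/C (C = set of objects) is represented by its family of fibres X c = X_c
  (empty outside the objects).\<close>

definition tensor :: "('o,'m) opcat \<Rightarrow> ('o \<Rightarrow> 'a set) \<Rightarrow> ('o \<Rightarrow> 'b set) \<Rightarrow> 'o \<Rightarrow> ('a \<times> 'm \<times> (nat \<Rightarrow> 'b)) set" where
  "tensor C X Y c = {(x, phi, y). phi \<in> Arr C \<and> Dom C phi = c \<and> x \<in> X (Cod C phi) \<and>
                        y \<in> PiE {..<cardO C (Cod C phi)} (\<lambda>i. Y (fib C phi i))}"

definition unitU :: "('o,'m) opcat \<Rightarrow> 'o \<Rightarrow> 'o set" where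
  "unitU C c = (if trivial_obj C c then {c} else {})"

definition assocC :: "('o,'m) opcat \<Rightarrow> ('a \<times> 'm \<times> (nat \<Rightarrow> 'b)) \<times> 'm \<times> (nat \<Rightarrow> 'c)
                        \<Rightarrow> 'a \<times> 'm \<times> (nat \<Rightarrow> 'b \<times> 'm \<times> (nat \<Rightarrow> 'c))" where
  "assocC C e = (case e of ((x, psi, y), phi, z) \<Rightarrow>
     (x, Comp C psi phi,
      \<lambda>i\<in>{..<cardO C (Cod C psi)}.
        (y i, fibm C phi psi i,
         \<lambda>k\<in>{..<cardO C (fib C psi i)}. z (sorted_list_of_set (fpre C psi i) ! k))))"

definition lamU :: "'o \<times> 'm \<times> (nat \<Rightarrow> 'b) \<Rightarrow> 'b" where
  "lamU e = (case e of (u, phi, y) \<Rightarrow> y 0)"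

definition one_lam :: "('o,'m) opcat \<Rightarrow> 'a \<times> 'm \<times> (nat \<Rightarrow> 'o \<times> 'm \<times> (nat \<Rightarrow> 'o)) \<Rightarrow> 'a \<times> 'm \<times> (nat \<Rightarrow> 'o)" where
  "one_lam C e = (case e of (x, th, w) \<Rightarrow> (x, th, \<lambda>i\<in>{..<cardO C (Cod C th)}. lamU (w i)))"

definition r_one :: "('a \<times> 'm \<times> (nat \<Rightarrow> 'o) \<Rightarrow> 'a) \<Rightarrow> ('a \<times> 'm \<times> (nat \<Rightarrow> 'o)) \<times> 'm \<times> (nat \<Rightarrow> 'o)
                       \<Rightarrow> 'a \<times> 'm \<times> (nat \<Rightarrow> 'o)" where
  "r_one r e = (case e of (xe, phi, z) \<Rightarrow> (r xe, phi, z))"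

definition rhoC :: "('o,'m) opcat \<Rightarrow> 'o \<Rightarrow> 'a \<Rightarrow> 'a \<times> 'm \<times> (nat \<Rightarrow> 'o)" where
  "rhoC C c x = (x, Idm C c, \<lambda>i\<in>{..<cardO C c}. fib C (Idm C c) i)"

type_synonym ('o,'m,'x) rmod = "('o \<Rightarrow> 'x set) \<times> ('x \<times> 'm \<times> (nat \<Rightarrow> 'o) \<Rightarrow> 'x)"
type_synonym ('o,'m,'x) rmod_arr = "('o,'m,'x) rmod \<times> ('o,'m,'x) rmod \<times> ('o \<Rightarrow> 'x \<Rightarrow> 'x)"

definition is_right_U_module :: "('o,'m) opcat \<Rightarrow> ('o,'m,'x) rmod \<Rightarrow> bool" where
  "is_right_U_module C M \<longleftrightarrow> (case M of (X, r) \<Rightarrow>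
     (\<forall>c. c \<notin> Obj C \<longrightarrow> X c = {}) \<and>
     (\<forall>c\<in>Obj C. \<forall>e\<in>tensor C X (unitU C) c. r e \<in> X c) \<and>
     (\<forall>e. e \<notin> (\<Union>c\<in>Obj C. tensor C X (unitU C) c) \<longrightarrow> r e = undefined) \<and>
     (\<forall>c\<in>Obj C. \<forall>e\<in>tensor C (tensor C X (unitU C)) (unitU C) c.
        r (r_one r e) = r (one_lam C (assocC C e))) \<and>
     (\<forall>c\<in>Obj C. \<forall>x\<in>X c. r (rhoC C c x) = x))"

definition is_module_map :: "('o,'m) opcat \<Rightarrow> ('o,'m,'x) rmod \<Rightarrow> ('o,'m,'x) rmod \<Rightarrow> ('o \<Rightarrow> 'x \<Rightarrow> 'x) \<Rightarrow> bool" where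
  "is_module_map C M N f \<longleftrightarrow> (case M of (X, r) \<Rightarrow> case N of (Y, s) \<Rightarrow>
     (\<forall>c\<in>Obj C. \<forall>x\<in>X c. f c x \<in> Y c) \<and>
     (\<forall>c\<in>Obj C. \<forall>x phi z. (x, phi, z) \<in> tensor C X (unitU C) c \<longrightarrow>
        f c (r (x, phi, z)) = s (f (Cod C phi) x, phi, z)) \<and>
     (\<forall>c x. x \<notin> X c \<longrightarrow> f c x = undefined))"

definition ModU :: "('o,'m) opcat \<Rightarrow> (('o,'m,'x) rmod, ('o,'m,'x) rmod_arr) category" where
  "ModU C = \<lparr> Obj = {M. is_right_U_module C M},
              Arr = {(M, N, f). is_right_U_module C M \<and> is_right_U_module C N \<and> is_module_map C M N f},
              Dom = (\<lambda>(M, N, f). M),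
              Cod = (\<lambda>(M, N, f). N),
              Idm = (\<lambda>M. (M, M, \<lambda>c. \<lambda>x\<in>fst M c. x)),
              Comp = (\<lambda>(N', P, g) (M, N, f). (M, P, \<lambda>c. \<lambda>x\<in>fst M c. g c (f c x))) \<rparr>"

end

theory Submission
  imports Defs
begin

definition trivf :: "('o,'m) opcat \<Rightarrow> 'm \<Rightarrow> nat \<Rightarrow> 'o" where
  "trivf C phi = (\<lambda>i\<in>{..<cardO C (Cod C phi)}. fib C phi i)"

lemma tensorU_iff:
  "((x, phi, y) \<in> tensor C X (unitU C) c) \<longleftrightarrow>
    (fibrewise_trivial C phi \<and> Dom C phi = c \<and> x \<in> X (Cod C phi) \<and> y = trivf C phi)"
proof
  assume a: "(x, phi, y) \<in> tensor C X (unitU C) c"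
  then have y: "y \<in> PiE {..<cardO C (Cod C phi)} (\<lambda>i. unitU C (fib C phi i))"
    by (simp add: tensor_def)
  have tr: "\<forall>i<cardO C (Cod C phi). trivial_obj C (fib C phi i)"
  proof (intro allI impI)
    fix i assume "i < cardO C (Cod C phi)"
    then have "y i \<in> unitU C (fib C phi i)" using y by (auto simp: PiE_def Pi_def)
    then show "trivial_obj C (fib C phi i)" by (auto simp: unitU_def split: if_splits)
  qed
  have "y = trivf C phi"
  proof
    fix i show "y i = trivf C phi i"
    proof (cases "i < cardO C (Cod C phi)")
      case True
      then have "y i \<in> unitU C (fib C phi i)" using y by (auto simp: PiE_def Pi_def)
      then show ?thesis using True by (auto simp: unitU_def trivf_def split: if_splits)
    next
      case False
      then show ?thesis using y by (auto simp: PiE_def extensional_def trivf_def)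
    qed
  qed
  then show "fibrewise_trivial C phi \<and> Dom C phi = c \<and> x \<in> X (Cod C phi) \<and> y = trivf C phi"
    using a tr by (auto simp: tensor_def fibrewise_trivial_def)
next
  assume "fibrewise_trivial C phi \<and> Dom C phi = c \<and> x \<in> X (Cod C phi) \<and> y = trivf C phi"
  then show "(x, phi, y) \<in> tensor C X (unitU C) c"
    by (auto simp: tensor_def fibrewise_trivial_def trivf_def unitU_def PiE_def Pi_def)
qed

lemma opc_cat: "operadic_category C \<Longrightarrow> is_category C"
  by (simp add: operadic_category_def)

lemma ax_fibm:
  assumes "operadic_category C"
  shows "\<forall>phi\<in>Arr C. \<forall>psi\<in>Arr C. Cod C phi = Dom C psi \<longrightarrow> (\<forall>i<cardO C (Cod C psi).
        fibm C phi psi i \<in> Arr C \<and>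
        Dom C (fibm C phi psi i) = fib C (Comp C psi phi) i \<and>
        Cod C (fibm C phi psi i) = fib C psi i)"
  using assms unfolding operadic_category_def by (elim conjE) assumption

lemma comp_fib:
  assumes oc: "operadic_category C" and f: "fibrewise_trivial C f" and g: "fibrewise_trivial C g"
    and fg: "Cod C f = Dom C g" and i: "i < cardO C (Cod C g)"
  shows "\<exists>j. fpre C g i = {j} \<and> j < cardO C (Cod C f) \<and> cardM C g j = i \<and>
            fib C f j = fib C (Comp C g f) i"
proof -
  have fA: "f \<in> Arr C" and gA: "g \<in> Arr C" using f g by (auto simp: fibrewise_trivial_def)
  have trg: "trivial_obj C (fib C g i)" using g i by (simp add: fibrewise_trivial_def)
  have "cardO C (fib C g i) = card (fpre C g i)" using oc gA i by (simp add: operadic_category_def)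
  then have "card (fpre C g i) = 1" using trg by (simp add: trivial_obj_def)
  then obtain j where fj: "fpre C g i = {j}" by (auto simp: card_Suc_eq)
  then have jl: "j < cardO C (Dom C g)" and cj: "cardM C g j = i" by (auto simp: fpre_def)
  have pos: "fpos (fpre C g i) j = 0" using fj by (simp add: fpos_def)
  have ds: "fib C f j = fib C (fibm C f g (cardM C g j)) (fpos (fpre C g (cardM C g j)) j)"
    using oc gA fA fg jl unfolding operadic_category_def by blast
  have fm: "fibm C f g i \<in> Arr C \<and> Dom C (fibm C f g i) = fib C (Comp C g f) i \<and>
        Cod C (fibm C f g i) = fib C g i"
    using ax_fibm[OF oc] gA fA fg i by blast
  have "fib C (fibm C f g i) 0 = Dom C (fibm C f g i)"
    using trg fm by (simp add: trivial_obj_def)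
  then have "fib C f j = fib C (Comp C g f) i" using ds cj pos fm by simp
  then show ?thesis using fj jl cj fg by auto
qed

lemma fwt_comp:
  assumes oc: "operadic_category C" and f: "fibrewise_trivial C f" and g: "fibrewise_trivial C g"
    and fg: "Cod C f = Dom C g"
  shows "fibrewise_trivial C (Comp C g f)"
proof -
  have fA: "f \<in> Arr C" and gA: "g \<in> Arr C" using f g by (auto simp: fibrewise_trivial_def)
  have cat: "is_category C" using oc by (simp add: operadic_category_def)
  have A: "Comp C g f \<in> Arr C" "Cod C (Comp C g f) = Cod C g"
    using cat fA gA fg unfolding is_category_def by auto
  show ?thesis unfolding fibrewise_trivial_def
  proof (intro conjI allI impI)
    show "Comp C g f \<in> Arr C" by (rule A)
    fix i assume "i < cardO C (Cod C (Comp C g f))"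
    then have i: "i < cardO C (Cod C g)" using A by simp
    from comp_fib[OF oc f g fg i] obtain j where
      "j < cardO C (Cod C f)" "fib C f j = fib C (Comp C g f) i" by blast
    then show "trivial_obj C (fib C (Comp C g f) i)" using f by (auto simp: fibrewise_trivial_def)
  qed
qed

lemma assoc_comp:
  assumes oc: "operadic_category C" and f: "fibrewise_trivial C f" and g: "fibrewise_trivial C g"
    and fg: "Cod C f = Dom C g"
  shows "one_lam C (assocC C ((x, g, trivf C g), f, trivf C f)) = (x, Comp C g f, trivf C (Comp C g f))"
proof -
  have fA: "f \<in> Arr C" and gA: "g \<in> Arr C" using f g by (auto simp: fibrewise_trivial_def)
  have cat: "is_category C" using oc by (simp add: operadic_category_def)
  have A: "Cod C (Comp C g f) = Cod C g"
    using cat fA gA fg unfolding is_category_def by auto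
  have "(\<lambda>i\<in>{..<cardO C (Cod C g)}. lamU (trivf C g i, fibm C f g i,
         \<lambda>k\<in>{..<cardO C (fib C g i)}. trivf C f (sorted_list_of_set (fpre C g i) ! k)))
       = trivf C (Comp C g f)"
  proof
    fix i show "(\<lambda>i\<in>{..<cardO C (Cod C g)}. lamU (trivf C g i, fibm C f g i,
         \<lambda>k\<in>{..<cardO C (fib C g i)}. trivf C f (sorted_list_of_set (fpre C g i) ! k))) i
       = trivf C (Comp C g f) i"
    proof (cases "i < cardO C (Cod C g)")
      case True
      from comp_fib[OF oc f g fg True] obtain j where
        j: "fpre C g i = {j}" "j < cardO C (Cod C f)" "fib C f j = fib C (Comp C g f) i" by blast
      have "cardO C (fib C g i) = 1" using g True by (simp add: fibrewise_trivial_def trivial_obj_def)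
      then show ?thesis using True j A by (simp add: lamU_def trivf_def)
    next
      case False
      then show ?thesis using A by (simp add: trivf_def)
    qed
  qed
  moreover have "one_lam C (assocC C ((x, g, trivf C g), f, trivf C f)) =
     (x, Comp C g f, (\<lambda>i\<in>{..<cardO C (Cod C g)}. lamU (trivf C g i, fibm C f g i,
         \<lambda>k\<in>{..<cardO C (fib C g i)}. trivf C f (sorted_list_of_set (fpre C g i) ! k))))"
    unfolding assocC_def one_lam_def using A by (auto intro!: restrict_ext)
  ultimately show ?thesis by simp
qed

lemma cat_facts:
  assumes "is_category C"
  shows "f \<in> Arr C \<Longrightarrow> Dom C f \<in> Obj C" "f \<in> Arr C \<Longrightarrow> Cod C f \<in> Obj C"
    "a \<in> Obj C \<Longrightarrow> Idm C a \<in> Arr C" "a \<in> Obj C \<Longrightarrow> Dom C (Idm C a) = a"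
    "a \<in> Obj C \<Longrightarrow> Cod C (Idm C a) = a"
    "f \<in> Arr C \<Longrightarrow> g \<in> Arr C \<Longrightarrow> Cod C f = Dom C g \<Longrightarrow> Dom C (Comp C g f) = Dom C f"
    "f \<in> Arr C \<Longrightarrow> g \<in> Arr C \<Longrightarrow> Cod C f = Dom C g \<Longrightarrow> Cod C (Comp C g f) = Cod C g"
  using assms unfolding is_category_def by auto

lemma fwt_id:
  assumes oc: "operadic_category C" and a: "a \<in> Obj C"
  shows "fibrewise_trivial C (Idm C a)"
proof -
  have cat: "is_category C" using oc by (rule opc_cat)
  have "\<forall>a\<in>Obj C. \<forall>i<cardO C a. trivial_obj C (fib C (Idm C a) i)"
    using oc unfolding operadic_category_def by (elim conjE) assumption
  then show ?thesis using a cat_facts[OF cat] by (auto simp: fibrewise_trivial_def)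
qed

definition FoM :: "('o,'m) opcat \<Rightarrow> ('o,'m,'x) rmod \<Rightarrow> ('o,'m,'x) psh" where
  "FoM C M = (fst M, \<lambda>phi x. if fibrewise_trivial C phi \<and> x \<in> fst M (Cod C phi)
                              then snd M (x, phi, trivf C phi) else undefined)"

definition GoP :: "('o,'m) opcat \<Rightarrow> ('o,'m,'x) psh \<Rightarrow> ('o,'m,'x) rmod" where
  "GoP C F = (fst F, \<lambda>e. if e \<in> (\<Union>c\<in>Obj C. tensor C (fst F) (unitU C) c)
                          then snd F (fst (snd e)) (fst e) else undefined)"

lemma FoM_obj:
  assumes oc: "operadic_category C" and M: "is_right_U_module C (X, r)"
  shows "is_presheaf (FwTriv C) (FoM C (X, r))"
proof -
  have cat: "is_category C" using oc by (rule opc_cat)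
  note cf = cat_facts[OF cat]
  have M1: "\<And>c. c \<notin> Obj C \<Longrightarrow> X c = {}"
    and M2: "\<And>c e. c \<in> Obj C \<Longrightarrow> e \<in> tensor C X (unitU C) c \<Longrightarrow> r e \<in> X c"
    and M4: "\<And>c e. c \<in> Obj C \<Longrightarrow> e \<in> tensor C (tensor C X (unitU C)) (unitU C) c \<Longrightarrow>
        r (r_one r e) = r (one_lam C (assocC C e))"
    and M5: "\<And>c x. c \<in> Obj C \<Longrightarrow> x \<in> X c \<Longrightarrow> r (rhoC C c x) = x"
    using M unfolding is_right_U_module_def by auto
  have act: "\<And>f x. fibrewise_trivial C f \<Longrightarrow> x \<in> X (Cod C f) \<Longrightarrow> r (x, f, trivf C f) \<in> X (Dom C f)"
  proof -
    fix f x assume f: "fibrewise_trivial C f" and x: "x \<in> X (Cod C f)"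
    then have "f \<in> Arr C" by (simp add: fibrewise_trivial_def)
    then show "r (x, f, trivf C f) \<in> X (Dom C f)"
      using M2[of "Dom C f" "(x, f, trivf C f)"] f x cf by (simp add: tensorU_iff)
  qed
  show ?thesis unfolding is_presheaf_def
  proof (intro conjI ballI allI impI)
    fix c assume "c \<notin> Obj (FwTriv C)" then show "fst (FoM C (X, r)) c = {}"
      using M1 by (simp add: FoM_def FwTriv_def)
  next
    fix f x assume "f \<in> Arr (FwTriv C)" "x \<in> fst (FoM C (X, r)) (Cod (FwTriv C) f)"
    then show "snd (FoM C (X, r)) f x \<in> fst (FoM C (X, r)) (Dom (FwTriv C) f)"
      using act by (simp add: FoM_def FwTriv_def)
  next
    fix a x assume a: "a \<in> Obj (FwTriv C)" and x: "x \<in> fst (FoM C (X, r)) a"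
    have a': "a \<in> Obj C" using a by (simp add: FwTriv_def)
    have rh: "rhoC C a x = (x, Idm C a, trivf C (Idm C a))"
      using a' cf by (simp add: rhoC_def trivf_def)
    have "x \<in> X a" using x by (simp add: FoM_def)
    then have h: "r (rhoC C a x) = x" by (rule M5[OF a'])
    then have "r (x, Idm C a, trivf C (Idm C a)) = x" by (simp only: rh)
    then show "snd (FoM C (X, r)) (Idm (FwTriv C) a) x = x"
      using x a' fwt_id[OF oc a'] cf by (simp add: FoM_def FwTriv_def)
  next
    fix f g x assume f: "f \<in> Arr (FwTriv C)" and g: "g \<in> Arr (FwTriv C)"
      and fg: "Cod (FwTriv C) f = Dom (FwTriv C) g" and x: "x \<in> fst (FoM C (X, r)) (Cod (FwTriv C) g)"
    have f': "fibrewise_trivial C f" and g': "fibrewise_trivial C g" and fg': "Cod C f = Dom C g"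
      and x': "x \<in> X (Cod C g)"
      using f g fg x by (auto simp: FwTriv_def FoM_def)
    have fA: "f \<in> Arr C" and gA: "g \<in> Arr C" using f' g' by (auto simp: fibrewise_trivial_def)
    have gx: "r (x, g, trivf C g) \<in> X (Cod C f)" using act[OF g' x'] fg' by simp
    have e: "((x, g, trivf C g), f, trivf C f) \<in> tensor C (tensor C X (unitU C)) (unitU C) (Dom C f)"
      using f' g' fg' x' by (simp add: tensorU_iff tensor_def fibrewise_trivial_def unitU_def PiE_def Pi_def trivf_def)
    have "r (r (x, g, trivf C g), f, trivf C f) = r (x, Comp C g f, trivf C (Comp C g f))"
      using M4[OF cf(1)[OF fA] e] assoc_comp[OF oc f' g' fg', where x=x] by (simp add: r_one_def)
    then show "snd (FoM C (X, r)) (Comp (FwTriv C) g f) x =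
        snd (FoM C (X, r)) f (snd (FoM C (X, r)) g x)"
      using fwt_comp[OF oc f' g' fg'] x' gx g' f' cf(7)[OF fA gA fg'] by (simp add: FoM_def FwTriv_def)
  next
    fix f x assume "\<not> (f \<in> Arr (FwTriv C) \<and> x \<in> fst (FoM C (X, r)) (Cod (FwTriv C) f))"
    then show "snd (FoM C (X, r)) f x = undefined" by (auto simp: FoM_def FwTriv_def)
  qed
qed

lemma tensor2_elim:
  assumes "e \<in> tensor C (tensor C X (unitU C)) (unitU C) c"
  obtains x psi phi where "e = ((x, psi, trivf C psi), phi, trivf C phi)"
    "fibrewise_trivial C phi" "fibrewise_trivial C psi" "Dom C phi = c" "Cod C phi = Dom C psi"
    "x \<in> X (Cod C psi)"
proof -
  obtain a phi z where e: "e = (a, phi, z)" by (cases e) auto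
  obtain x psi y where a: "a = (x, psi, y)" by (cases a) auto
  have 1: "fibrewise_trivial C phi \<and> Dom C phi = c \<and> a \<in> tensor C X (unitU C) (Cod C phi) \<and> z = trivf C phi"
    using assms e tensorU_iff[of a phi z C "tensor C X (unitU C)" c] by simp
  then have "fibrewise_trivial C psi \<and> Dom C psi = Cod C phi \<and> x \<in> X (Cod C psi) \<and> y = trivf C psi"
    using a tensorU_iff by metis
  then show ?thesis using that 1 e a by auto
qed

lemma GoP_act:
  assumes cat: "is_category C" and f: "fibrewise_trivial C phi" and x: "x \<in> PA (Cod C phi)"
  shows "snd (GoP C (PA, PB)) (x, phi, trivf C phi) = PB phi x"
proof -
  have "phi \<in> Arr C" using f by (simp add: fibrewise_trivial_def)
  then have "Dom C phi \<in> Obj C" using cat_facts[OF cat] by simp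
  moreover have "(x, phi, trivf C phi) \<in> tensor C PA (unitU C) (Dom C phi)"
    using f x by (simp add: tensorU_iff)
  ultimately show ?thesis by (auto simp: GoP_def)
qed

lemma GoP_obj:
  assumes oc: "operadic_category C" and F: "is_presheaf (FwTriv C) (F0, F1)"
  shows "is_right_U_module C (GoP C (F0, F1))"
proof -
  have cat: "is_category C" using oc by (rule opc_cat)
  note cf = cat_facts[OF cat]
  have P1: "\<And>c. c \<notin> Obj C \<Longrightarrow> F0 c = {}"
    and P2: "\<And>f x. fibrewise_trivial C f \<Longrightarrow> x \<in> F0 (Cod C f) \<Longrightarrow> F1 f x \<in> F0 (Dom C f)"
    and P3: "\<And>a x. a \<in> Obj C \<Longrightarrow> x \<in> F0 a \<Longrightarrow> F1 (Idm C a) x = x"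
    and P4: "\<And>f g x. fibrewise_trivial C f \<Longrightarrow> fibrewise_trivial C g \<Longrightarrow> Cod C f = Dom C g \<Longrightarrow>
        x \<in> F0 (Cod C g) \<Longrightarrow> F1 (Comp C g f) x = F1 f (F1 g x)"
    using F unfolding is_presheaf_def FwTriv_def by auto
  let ?r = "snd (GoP C (F0, F1))"
  have fstG: "fst (GoP C (F0, F1)) = F0" by (simp add: GoP_def)
  have "(\<forall>c. c \<notin> Obj C \<longrightarrow> F0 c = {}) \<and>
     (\<forall>c\<in>Obj C. \<forall>e\<in>tensor C F0 (unitU C) c. ?r e \<in> F0 c) \<and>
     (\<forall>e. e \<notin> (\<Union>c\<in>Obj C. tensor C F0 (unitU C) c) \<longrightarrow> ?r e = undefined) \<and>
     (\<forall>c\<in>Obj C. \<forall>e\<in>tensor C (tensor C F0 (unitU C)) (unitU C) c.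
        ?r (r_one ?r e) = ?r (one_lam C (assocC C e))) \<and>
     (\<forall>c\<in>Obj C. \<forall>x\<in>F0 c. ?r (rhoC C c x) = x)"
  proof (intro conjI ballI allI impI)
    fix c assume "c \<notin> Obj C" then show "F0 c = {}" by (rule P1)
  next
    fix c e assume c: "c \<in> Obj C" and e: "e \<in> tensor C F0 (unitU C) c"
    obtain x phi y where ee: "e = (x, phi, y)" by (cases e) auto
    have h: "fibrewise_trivial C phi \<and> Dom C phi = c \<and> x \<in> F0 (Cod C phi) \<and> y = trivf C phi"
      using e ee tensorU_iff by metis
    then show "?r e \<in> F0 c" using ee GoP_act[OF cat, of phi x F0 F1] P2 by auto
  next
    fix e assume "e \<notin> (\<Union>c\<in>Obj C. tensor C F0 (unitU C) c)"
    then show "?r e = undefined" by (simp add: GoP_def)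
  next
    fix c e assume c: "c \<in> Obj C" and e: "e \<in> tensor C (tensor C F0 (unitU C)) (unitU C) c"
    from tensor2_elim[OF e] obtain x psi phi where h: "e = ((x, psi, trivf C psi), phi, trivf C phi)"
      "fibrewise_trivial C phi" "fibrewise_trivial C psi" "Dom C phi = c" "Cod C phi = Dom C psi"
      "x \<in> F0 (Cod C psi)" by blast
    have 1: "?r (x, psi, trivf C psi) = F1 psi x" using GoP_act[where PA=F0 and PB=F1, OF cat h(3) h(6)] .
    have 2: "F1 psi x \<in> F0 (Cod C phi)" using P2[OF h(3) h(6)] h(5) by simp
    have 3: "?r (r_one ?r e) = F1 phi (F1 psi x)"
      using h(1) 1 GoP_act[where PA=F0 and PB=F1, OF cat h(2) 2] by (simp add: r_one_def)
    have fA: "phi \<in> Arr C" and gA: "psi \<in> Arr C" using h by (auto simp: fibrewise_trivial_def)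
    have 4: "?r (one_lam C (assocC C e)) = F1 (Comp C psi phi) x"
      using h(1) assoc_comp[OF oc h(2) h(3) h(5), where x=x]
        GoP_act[OF cat fwt_comp[OF oc h(2) h(3) h(5)], of x F0 F1] h(6) cf(7)[OF fA gA h(5)]
      by simp
    show "?r (r_one ?r e) = ?r (one_lam C (assocC C e))"
      using 3 4 P4[OF h(2) h(3) h(5) h(6)] by simp
  next
    fix c x assume c: "c \<in> Obj C" and x: "x \<in> F0 c"
    have rh: "rhoC C c x = (x, Idm C c, trivf C (Idm C c))"
      using c cf by (simp add: rhoC_def trivf_def)
    show "?r (rhoC C c x) = x"
      using rh GoP_act[OF cat fwt_id[OF oc c], of x F0 F1] x c cf P3 by simp
  qed
  then show ?thesis unfolding is_right_U_module_def by (simp add: GoP_def)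
qed

lemma GoFo:
  assumes oc: "operadic_category C" and M: "is_right_U_module C (X, r)"
  shows "GoP C (FoM C (X, r)) = (X, r)"
proof -
  have cat: "is_category C" using oc by (rule opc_cat)
  have M3: "\<And>e. e \<notin> (\<Union>c\<in>Obj C. tensor C X (unitU C) c) \<Longrightarrow> r e = undefined"
    using M unfolding is_right_U_module_def by auto
  have "(\<lambda>e. if e \<in> (\<Union>c\<in>Obj C. tensor C X (unitU C) c)
          then snd (FoM C (X, r)) (fst (snd e)) (fst e) else undefined) = r"
  proof
    fix e
    show "(if e \<in> (\<Union>c\<in>Obj C. tensor C X (unitU C) c)
          then snd (FoM C (X, r)) (fst (snd e)) (fst e) else undefined) = r e"
    proof (cases "e \<in> (\<Union>c\<in>Obj C. tensor C X (unitU C) c)")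
      case True
      then obtain c where c: "e \<in> tensor C X (unitU C) c" by blast
      obtain x phi y where ee: "e = (x, phi, y)" by (cases e) auto
      have h: "fibrewise_trivial C phi \<and> Dom C phi = c \<and> x \<in> X (Cod C phi) \<and> y = trivf C phi"
        using c ee tensorU_iff by metis
      then show ?thesis using True ee by (simp add: FoM_def)
    next
      case False then show ?thesis using M3 by simp
    qed
  qed
  moreover have "fst (FoM C (X, r)) = X" by (simp add: FoM_def)
  ultimately show ?thesis unfolding GoP_def by simp
qed

lemma FoGo:
  assumes oc: "operadic_category C" and F: "is_presheaf (FwTriv C) (F0, F1)"
  shows "FoM C (GoP C (F0, F1)) = (F0, F1)"
proof -
  have cat: "is_category C" using oc by (rule opc_cat)
  have P5: "\<And>f x. \<not> (fibrewise_trivial C f \<and> x \<in> F0 (Cod C f)) \<Longrightarrow> F1 f x = undefined"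
    using F unfolding is_presheaf_def FwTriv_def by auto
  have "(\<lambda>phi x. if fibrewise_trivial C phi \<and> x \<in> F0 (Cod C phi)
          then snd (GoP C (F0, F1)) (x, phi, trivf C phi) else undefined) = F1"
  proof (intro ext)
    fix phi x
    show "(if fibrewise_trivial C phi \<and> x \<in> F0 (Cod C phi)
          then snd (GoP C (F0, F1)) (x, phi, trivf C phi) else undefined) = F1 phi x"
      using GoP_act[OF cat, of phi x F0 F1] P5[of phi x] by auto
  qed
  moreover have "fst (GoP C (F0, F1)) = F0" by (simp add: GoP_def)
  ultimately show ?thesis unfolding FoM_def by simp
qed

lemma Fo_map:
  assumes oc: "operadic_category C" and M: "is_right_U_module C (X, r)"
    and N: "is_right_U_module C (Y, s)" and f: "is_module_map C (X, r) (Y, s) h"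
  shows "is_psh_nat (FwTriv C) (FoM C (X, r)) (FoM C (Y, s)) h"
proof -
  have cat: "is_category C" using oc by (rule opc_cat)
  note cf = cat_facts[OF cat]
  have f1: "\<And>c x. c \<in> Obj C \<Longrightarrow> x \<in> X c \<Longrightarrow> h c x \<in> Y c"
    and f2: "\<And>c x phi z. c \<in> Obj C \<Longrightarrow> (x, phi, z) \<in> tensor C X (unitU C) c \<Longrightarrow>
        h c (r (x, phi, z)) = s (h (Cod C phi) x, phi, z)"
    and f3: "\<And>c x. x \<notin> X c \<Longrightarrow> h c x = undefined"
    using f unfolding is_module_map_def by auto
  show ?thesis unfolding is_psh_nat_def
  proof (intro conjI ballI allI impI)
    fix c x assume "c \<in> Obj (FwTriv C)" "x \<in> fst (FoM C (X, r)) c"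
    then show "h c x \<in> fst (FoM C (Y, s)) c" using f1 by (simp add: FwTriv_def FoM_def)
  next
    fix phi x assume p: "phi \<in> Arr (FwTriv C)" and x: "x \<in> fst (FoM C (X, r)) (Cod (FwTriv C) phi)"
    have p': "fibrewise_trivial C phi" and x': "x \<in> X (Cod C phi)"
      using p x by (auto simp: FwTriv_def FoM_def)
    have pA: "phi \<in> Arr C" using p' by (simp add: fibrewise_trivial_def)
    have 1: "h (Dom C phi) (r (x, phi, trivf C phi)) = s (h (Cod C phi) x, phi, trivf C phi)"
      using f2[OF cf(1)[OF pA]] p' x' by (simp add: tensorU_iff)
    have 2: "h (Cod C phi) x \<in> Y (Cod C phi)" using f1[OF cf(2)[OF pA] x'] .
    show "h (Dom (FwTriv C) phi) (snd (FoM C (X, r)) phi x) =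
          snd (FoM C (Y, s)) phi (h (Cod (FwTriv C) phi) x)"
      using 1 2 p' x' by (simp add: FwTriv_def FoM_def)
  next
    fix c x assume "x \<notin> fst (FoM C (X, r)) c"
    then show "h c x = undefined" using f3 by (simp add: FoM_def)
  qed
qed

lemma Go_map:
  assumes oc: "operadic_category C" and F: "is_presheaf (FwTriv C) (F0, F1)"
    and G: "is_presheaf (FwTriv C) (G0, G1)" and f: "is_psh_nat (FwTriv C) (F0, F1) (G0, G1) h"
  shows "is_module_map C (GoP C (F0, F1)) (GoP C (G0, G1)) h"
proof -
  have cat: "is_category C" using oc by (rule opc_cat)
  note cf = cat_facts[OF cat]
  have f1: "\<And>c x. c \<in> Obj C \<Longrightarrow> x \<in> F0 c \<Longrightarrow> h c x \<in> G0 c"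
    and f2: "\<And>phi x. fibrewise_trivial C phi \<Longrightarrow> x \<in> F0 (Cod C phi) \<Longrightarrow>
        h (Dom C phi) (F1 phi x) = G1 phi (h (Cod C phi) x)"
    and f3: "\<And>c x. x \<notin> F0 c \<Longrightarrow> h c x = undefined"
    using f unfolding is_psh_nat_def FwTriv_def by auto
  have "(\<forall>c\<in>Obj C. \<forall>x\<in>F0 c. h c x \<in> G0 c) \<and>
     (\<forall>c\<in>Obj C. \<forall>x phi z. (x, phi, z) \<in> tensor C F0 (unitU C) c \<longrightarrow>
        h c (snd (GoP C (F0, F1)) (x, phi, z)) = snd (GoP C (G0, G1)) (h (Cod C phi) x, phi, z)) \<and>
     (\<forall>c x. x \<notin> F0 c \<longrightarrow> h c x = undefined)"
  proof (intro conjI ballI allI impI)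
    fix c x assume "c \<in> Obj C" "x \<in> F0 c" then show "h c x \<in> G0 c" by (rule f1)
  next
    fix c x phi z assume c: "c \<in> Obj C" and t: "(x, phi, z) \<in> tensor C F0 (unitU C) c"
    have hh: "fibrewise_trivial C phi \<and> Dom C phi = c \<and> x \<in> F0 (Cod C phi) \<and> z = trivf C phi"
      using t tensorU_iff by metis
    have pA: "phi \<in> Arr C" using hh by (simp add: fibrewise_trivial_def)
    have 2: "h (Cod C phi) x \<in> G0 (Cod C phi)" using f1 cf(2)[OF pA] hh by blast
    show "h c (snd (GoP C (F0, F1)) (x, phi, z)) = snd (GoP C (G0, G1)) (h (Cod C phi) x, phi, z)"
      using hh f2[of phi x] GoP_act[OF cat, of phi x F0 F1] GoP_act[OF cat, of phi "h (Cod C phi) x" G0 G1] 2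
      by auto
  next
    fix c x assume "x \<notin> F0 c" then show "h c x = undefined" by (rule f3)
  qed
  then show ?thesis unfolding is_module_map_def by (simp add: GoP_def)
qed

definition unitlaws :: "('a,'b) category \<Rightarrow> bool" where
  "unitlaws A \<longleftrightarrow> (\<forall>f\<in>Arr A. Dom A f \<in> Obj A \<and> Cod A f \<in> Obj A) \<and>
     (\<forall>a\<in>Obj A. Idm A a \<in> Arr A \<and> Dom A (Idm A a) = a \<and> Cod A (Idm A a) = a) \<and>
     (\<forall>f\<in>Arr A. Comp A f (Idm A (Dom A f)) = f \<and> Comp A (Idm A (Cod A f)) f = f)"

lemma equiv_iso:
  fixes A :: "('a,'b) category" and B :: "('c,'d) category"
  assumes F: "is_functor A B Fo Fa" and G: "is_functor B A Go Ga"
    and GF: "\<forall>a\<in>Obj A. Go (Fo a) = a" "\<forall>f\<in>Arr A. Ga (Fa f) = f"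
    and FG: "\<forall>b\<in>Obj B. Fo (Go b) = b" "\<forall>f\<in>Arr B. Fa (Ga f) = f"
    and UA: "unitlaws A" and UB: "unitlaws B"
  shows "equivalent_categories A B"
  unfolding equivalent_categories_def
proof (intro exI conjI)
  show "is_functor A B Fo Fa" by (rule F)
  show "is_functor B A Go Ga" by (rule G)
  show "is_nat_iso A A id id (Go \<circ> Fo) (Ga \<circ> Fa) (Idm A)"
    using UA GF unfolding is_nat_iso_def is_iso_def unitlaws_def by (auto 4 4)
  show "is_nat_iso B B (Fo \<circ> Go) (Fa \<circ> Ga) id id (Idm B)"
    using UB FG unfolding is_nat_iso_def is_iso_def unitlaws_def by (auto 4 4)
qed

lemma ModU_unit:
  shows "unitlaws (ModU C)"
proof -
  have idmap: "is_module_map C M M (\<lambda>c. \<lambda>x\<in>fst M c. x)" if M: "is_right_U_module C M" for M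
  proof -
    obtain X r where Me: "M = (X, r)" by (cases M) auto
    have M2: "\<And>c e. c \<in> Obj C \<Longrightarrow> e \<in> tensor C X (unitU C) c \<Longrightarrow> r e \<in> X c"
      using M Me unfolding is_right_U_module_def by auto
    show ?thesis unfolding Me is_module_map_def
      using M2 by (auto simp: tensor_def)
  qed
  have lft: "(\<lambda>c. \<lambda>x\<in>fst M c. f c ((\<lambda>x\<in>fst M c. x) x)) = f"
    if "is_module_map C M N f" for M N f
  proof -
    obtain X r Y s where Me: "M = (X, r)" "N = (Y, s)" by (cases M, cases N) auto
    have "\<And>c x. x \<notin> X c \<Longrightarrow> f c x = undefined" using that Me by (simp add: is_module_map_def)
    then show ?thesis using Me by (auto intro!: ext)
  qed
  have rgt: "(\<lambda>c. \<lambda>x\<in>fst M c. (\<lambda>x\<in>fst N c. x) (f c x)) = f"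
    if "is_right_U_module C M" "is_module_map C M N f" for M N f
  proof -
    obtain X r Y s where Me: "M = (X, r)" "N = (Y, s)" by (cases M, cases N) auto
    have "\<And>c x. x \<notin> X c \<Longrightarrow> f c x = undefined" "\<And>c x. c \<in> Obj C \<Longrightarrow> x \<in> X c \<Longrightarrow> f c x \<in> Y c"
      "\<And>c. c \<notin> Obj C \<Longrightarrow> X c = {}"
      using that Me by (auto simp: is_module_map_def is_right_U_module_def)
    then show ?thesis using Me by (auto intro!: ext) (metis empty_iff)
  qed
  show ?thesis unfolding unitlaws_def ModU_def using idmap lft rgt by auto
qed

lemma PSh_unit:
  shows "unitlaws (PSh D)"
proof -
  have idmap: "is_psh_nat D F F (\<lambda>c. \<lambda>x\<in>fst F c. x)" if F: "is_presheaf D F" for F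
    using F unfolding is_psh_nat_def is_presheaf_def by auto
  have lft: "(\<lambda>c. \<lambda>x\<in>fst F c. f c ((\<lambda>x\<in>fst F c. x) x)) = f"
    if "is_psh_nat D F G f" for F G f
  proof -
    have "\<And>c x. x \<notin> fst F c \<Longrightarrow> f c x = undefined" using that by (simp add: is_psh_nat_def)
    then show ?thesis by (auto intro!: ext)
  qed
  have rgt: "(\<lambda>c. \<lambda>x\<in>fst F c. (\<lambda>x\<in>fst G c. x) (f c x)) = f"
    if "is_presheaf D F" "is_psh_nat D F G f" for F G f
  proof -
    have "\<And>c x. x \<notin> fst F c \<Longrightarrow> f c x = undefined" "\<And>c x. c \<in> Obj D \<Longrightarrow> x \<in> fst F c \<Longrightarrow> f c x \<in> fst G c"
      "\<And>c. c \<notin> Obj D \<Longrightarrow> fst F c = {}"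
      using that by (auto simp: is_psh_nat_def is_presheaf_def)
    then show ?thesis by (auto intro!: ext) (metis empty_iff)
  qed
  show ?thesis unfolding unitlaws_def PSh_def using idmap lft rgt by auto
qed

lemma fst_FoM [simp]: "fst (FoM C M) = fst M" by (simp add: FoM_def)
lemma fst_GoP [simp]: "fst (GoP C F) = fst F" by (simp add: GoP_def)

definition FaM :: "('o,'m) opcat \<Rightarrow> ('o,'m,'x) rmod_arr \<Rightarrow> ('o,'m,'x) psh_arr" where
  "FaM C a = (case a of (M, N, f) \<Rightarrow> (FoM C M, FoM C N, f))"
definition GaP :: "('o,'m) opcat \<Rightarrow> ('o,'m,'x) psh_arr \<Rightarrow> ('o,'m,'x) rmod_arr" where
  "GaP C a = (case a of (M, N, f) \<Rightarrow> (GoP C M, GoP C N, f))"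

lemma FoM_obj': "operadic_category C \<Longrightarrow> is_right_U_module C M \<Longrightarrow> is_presheaf (FwTriv C) (FoM C M)"
  by (cases M) (simp add: FoM_obj)
lemma GoP_obj': "operadic_category C \<Longrightarrow> is_presheaf (FwTriv C) F \<Longrightarrow> is_right_U_module C (GoP C F)"
  by (cases F) (simp add: GoP_obj)
lemma Fo_map': "operadic_category C \<Longrightarrow> is_right_U_module C M \<Longrightarrow> is_right_U_module C N \<Longrightarrow>
   is_module_map C M N h \<Longrightarrow> is_psh_nat (FwTriv C) (FoM C M) (FoM C N) h"
  by (cases M, cases N) (simp add: Fo_map)
lemma Go_map': "operadic_category C \<Longrightarrow> is_presheaf (FwTriv C) F \<Longrightarrow> is_presheaf (FwTriv C) G \<Longrightarrow>
   is_psh_nat (FwTriv C) F G h \<Longrightarrow> is_module_map C (GoP C F) (GoP C G) h"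
  by (cases F, cases G) (simp add: Go_map)
lemma GoFo': "operadic_category C \<Longrightarrow> is_right_U_module C M \<Longrightarrow> GoP C (FoM C M) = M"
  by (cases M) (simp add: GoFo)
lemma FoGo': "operadic_category C \<Longrightarrow> is_presheaf (FwTriv C) F \<Longrightarrow> FoM C (GoP C F) = F"
  by (cases F) (simp add: FoGo)

lemma Fo_functor:
  assumes oc: "operadic_category C"
  shows "is_functor (ModU C :: (('o,'m,'x) rmod, ('o,'m,'x) rmod_arr) category)
                    (PSh (FwTriv C)) (FoM C) (FaM C)"
  unfolding is_functor_def
proof (intro conjI ballI impI)
  fix a :: "('o,'m,'x) rmod" assume "a \<in> Obj (ModU C)"
  then show "FoM C a \<in> Obj (PSh (FwTriv C))" using FoM_obj'[OF oc] by (simp add: ModU_def PSh_def)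
next
  fix f :: "('o,'m,'x) rmod_arr" assume "f \<in> Arr (ModU C)"
  note fa = this
  show "FaM C f \<in> Arr (PSh (FwTriv C))"
  proof -
    obtain M N h where fe: "f = (M, N, h)" by (cases f) auto
    show ?thesis using fa FoM_obj'[OF oc, of M] FoM_obj'[OF oc, of N] Fo_map'[OF oc, of M N h]
      unfolding fe by (simp add: ModU_def PSh_def FaM_def)
  qed
next
  fix f :: "('o,'m,'x) rmod_arr" assume "f \<in> Arr (ModU C)"
  then show "Dom (PSh (FwTriv C)) (FaM C f) = FoM C (Dom (ModU C) f)"
    by (auto simp: ModU_def PSh_def FaM_def)
next
  fix f :: "('o,'m,'x) rmod_arr" assume "f \<in> Arr (ModU C)"
  then show "Cod (PSh (FwTriv C)) (FaM C f) = FoM C (Cod (ModU C) f)"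
    by (auto simp: ModU_def PSh_def FaM_def)
next
  fix a :: "('o,'m,'x) rmod" assume "a \<in> Obj (ModU C)"
  then show "FaM C (Idm (ModU C) a) = Idm (PSh (FwTriv C)) (FoM C a)"
    by (simp add: ModU_def PSh_def FaM_def)
next
  fix f g :: "('o,'m,'x) rmod_arr" assume "f \<in> Arr (ModU C)" "g \<in> Arr (ModU C)"
    "Cod (ModU C) f = Dom (ModU C) g"
  then show "FaM C (Comp (ModU C) g f) = Comp (PSh (FwTriv C)) (FaM C g) (FaM C f)"
    by (auto simp: ModU_def PSh_def FaM_def)
qed

lemma Go_functor:
  assumes oc: "operadic_category C"
  shows "is_functor (PSh (FwTriv C) :: (('o,'m,'x) psh, ('o,'m,'x) psh_arr) category)
                    (ModU C) (GoP C) (GaP C)"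
  unfolding is_functor_def
proof (intro conjI ballI impI)
  fix a :: "('o,'m,'x) psh" assume "a \<in> Obj (PSh (FwTriv C))"
  then show "GoP C a \<in> Obj (ModU C)" using GoP_obj'[OF oc] by (simp add: ModU_def PSh_def)
next
  fix f :: "('o,'m,'x) psh_arr" assume "f \<in> Arr (PSh (FwTriv C))"
  note fa = this
  show "GaP C f \<in> Arr (ModU C)"
  proof -
    obtain M N h where fe: "f = (M, N, h)" by (cases f) auto
    show ?thesis using fa GoP_obj'[OF oc, of M] GoP_obj'[OF oc, of N] Go_map'[OF oc, of M N h]
      unfolding fe by (simp add: ModU_def PSh_def GaP_def)
  qed
next
  fix f :: "('o,'m,'x) psh_arr" assume "f \<in> Arr (PSh (FwTriv C))"
  then show "Dom (ModU C) (GaP C f) = GoP C (Dom (PSh (FwTriv C)) f)"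
    by (auto simp: ModU_def PSh_def GaP_def)
next
  fix f :: "('o,'m,'x) psh_arr" assume "f \<in> Arr (PSh (FwTriv C))"
  then show "Cod (ModU C) (GaP C f) = GoP C (Cod (PSh (FwTriv C)) f)"
    by (auto simp: ModU_def PSh_def GaP_def)
next
  fix a :: "('o,'m,'x) psh" assume "a \<in> Obj (PSh (FwTriv C))"
  then show "GaP C (Idm (PSh (FwTriv C)) a) = Idm (ModU C) (GoP C a)"
    by (simp add: ModU_def PSh_def GaP_def)
next
  fix f g :: "('o,'m,'x) psh_arr" assume "f \<in> Arr (PSh (FwTriv C))" "g \<in> Arr (PSh (FwTriv C))"
    "Cod (PSh (FwTriv C)) f = Dom (PSh (FwTriv C)) g"
  then show "GaP C (Comp (PSh (FwTriv C)) g f) = Comp (ModU C) (GaP C g) (GaP C f)"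
    by (auto simp: ModU_def PSh_def GaP_def)
qed

theorem proposition9p1:
  fixes C :: "('o,'m) opcat"
  assumes "operadic_category C"
  shows "equivalent_categories (ModU C :: (('o,'m,'x) rmod, ('o,'m,'x) rmod_arr) category)
                               (PSh (FwTriv C) :: (('o,'m,'x) psh, ('o,'m,'x) psh_arr) category)"
proof (rule equiv_iso[OF Fo_functor[OF assms] Go_functor[OF assms] _ _ _ _ ModU_unit PSh_unit])
  show "\<forall>a\<in>Obj (ModU C :: (('o,'m,'x) rmod, ('o,'m,'x) rmod_arr) category). GoP C (FoM C a) = a"
    using GoFo'[OF assms] by (auto simp: ModU_def)
  show "\<forall>f\<in>Arr (ModU C :: (('o,'m,'x) rmod, ('o,'m,'x) rmod_arr) category). GaP C (FaM C f) = f"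
    using GoFo'[OF assms] by (auto simp: ModU_def FaM_def GaP_def)
  show "\<forall>b\<in>Obj (PSh (FwTriv C) :: (('o,'m,'x) psh, ('o,'m,'x) psh_arr) category). FoM C (GoP C b) = b"
    using FoGo'[OF assms] by (auto simp: PSh_def)
  show "\<forall>f\<in>Arr (PSh (FwTriv C) :: (('o,'m,'x) psh, ('o,'m,'x) psh_arr) category). FaM C (GaP C f) = f"
    using FoGo'[OF assms] by (auto simp: PSh_def FaM_def GaP_def)
qed

end
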